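(* Let $q$ be a prime power and let $n,k,r$ be integers with $4\le k\le\frac{n-1}{2}$, $n\le q$, and $2\le r\le k-2$; set $h=(k-1)+r$ and assume $h\le q-2$. Let $\alpha_1,\dots,\alpha_n\in\mathbb{F}_q$ be pairwise distinct and let $C_{h,k}$ be the linear code generated by the $k\times n$ matrix whose rows are $(\alpha_1^{e},\dots,\alpha_n^{e})$ for $e=0,1,\dots,k-2$ and $e=h$. If $C_{h,k}$ is MDS, then $C_{h,k}$ is a non-GRS MDS code.
   Context: Convention: $0^0=1$. A linear code is MDS if its parameters $[n,k,d]$ satisfy $d=n-k+1$. For pairwise distinct $a_1,\dots,a_n\in\mathbb{F}_q$ and $w\in(\mathbb{F}_q^* )^n$, $GRS(n,k,\{a_i\},w)=\{(w_1f(a_1),\dots,w_nf(a_n)) : f\in\mathbb{F}_q[x],\ \deg f\le k-1\}$. Two codes are (monomially) equivalent if one is obtained from the other by permuting coordinates and scaling coordinates by nonzero scalars. A non-GRS MDS code is an MDS code not equivalent to any GRS code. *)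

theory Defs
  imports "HOL-Computational_Algebra.Polynomial" "HOL-Library.Cardinality" "HOL-Combinatorics.Permutations"
begin

text \<open>Vectors of length n over a field are modelled as functions nat => 'a
  that vanish outside the index set {..<n}. A code of length n is a set of such vectors.\<close>

definition hweight :: "nat \<Rightarrow> (nat \<Rightarrow> 'a::zero) \<Rightarrow> nat" where
  "hweight n v = card {i. i < n \<and> v i \<noteq> 0}"

definition min_dist :: "nat \<Rightarrow> (nat \<Rightarrow> 'a::zero) set \<Rightarrow> nat" where
  "min_dist n C = Min (hweight n ` (C - {\<lambda>_. 0}))"

definition code_dim :: "(nat \<Rightarrow> 'a::{finite,field}) set \<Rightarrow> nat" where
  "code_dim C = (THE k. card C = CARD('a) ^ k)"

definition is_MDS :: "nat \<Rightarrow> (nat \<Rightarrow> 'a::{finite,field}) set \<Rightarrow> bool" where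
  "is_MDS n C \<longleftrightarrow> min_dist n C = n - code_dim C + 1"

definition GRS :: "nat \<Rightarrow> nat \<Rightarrow> (nat \<Rightarrow> 'a::field) \<Rightarrow> (nat \<Rightarrow> 'a) \<Rightarrow> (nat \<Rightarrow> 'a) set" where
  "GRS n k a w = {(\<lambda>i. if i < n then w i * poly f (a i) else 0) | f. f = 0 \<or> degree f < k}"

definition mono_equiv :: "nat \<Rightarrow> (nat \<Rightarrow> 'a::field) set \<Rightarrow> (nat \<Rightarrow> 'a) set \<Rightarrow> bool" where
  "mono_equiv n C D \<longleftrightarrow> (\<exists>\<sigma> s. \<sigma> permutes {..<n} \<and> (\<forall>i<n. s i \<noteq> 0) \<and>
      D = (\<lambda>v. \<lambda>i. if i < n then s i * v (\<sigma> i) else 0) ` C)"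

definition is_GRS_equiv :: "nat \<Rightarrow> (nat \<Rightarrow> 'a::field) set \<Rightarrow> bool" where
  "is_GRS_equiv n C \<longleftrightarrow> (\<exists>k a w. inj_on a {..<n} \<and> (\<forall>i<n. w i \<noteq> 0) \<and>
      mono_equiv n C (GRS n k a w))"

definition eval_code :: "nat \<Rightarrow> nat set \<Rightarrow> (nat \<Rightarrow> 'a::field) \<Rightarrow> (nat \<Rightarrow> 'a) set" where
  "eval_code n E \<alpha> = {(\<lambda>i. if i < n then (\<Sum>e\<in>E. c e * \<alpha> i ^ e) else 0) | c. True}"

definition C_hk :: "nat \<Rightarrow> nat \<Rightarrow> nat \<Rightarrow> (nat \<Rightarrow> 'a::field) \<Rightarrow> (nat \<Rightarrow> 'a) set" where
  "C_hk n h k \<alpha> = eval_code n ({0..k-2} \<union> {h}) \<alpha>"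

end

theory Submission imports Defs "HOL-Library.Function_Algebras" begin

definition sc :: "'a::field \<Rightarrow> (nat \<Rightarrow> 'a) \<Rightarrow> (nat \<Rightarrow> 'a)" where
  "sc c v = (\<lambda>i. c * v i)"

interpretation V: vector_space "sc :: 'a::field \<Rightarrow> (nat \<Rightarrow> 'a) \<Rightarrow> _"
  by unfold_locales (auto simp: sc_def fun_eq_iff algebra_simps)

lemma sum_fun_apply: "(sum f A) (i::nat) = (\<Sum>a\<in>A. f a i)"
  by (induction A rule: infinite_finite_induct) auto

definition ev :: "nat \<Rightarrow> (nat \<Rightarrow> 'a::field) \<Rightarrow> (nat \<Rightarrow> 'a) \<Rightarrow> nat \<Rightarrow> (nat \<Rightarrow> 'a)" where
  "ev n u \<beta> j = (\<lambda>i. if i < n then u i * \<beta> i ^ j else 0)"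

lemma poly_zero_many_roots:
  fixes p :: "'a::field poly"
  assumes "inj_on \<beta> {..<n}" "degree p < n" "\<And>i. i < n \<Longrightarrow> poly p (\<beta> i) = 0"
  shows "p = 0"
proof (rule ccontr)
  assume p: "p \<noteq> 0"
  have "n = card (\<beta> ` {..<n})" using assms(1) by (simp add: card_image)
  also have "\<dots> \<le> card {x. poly p x = 0}"
    by (intro card_mono poly_roots_finite p) (auto simp: assms(3))
  also have "\<dots> \<le> degree p" by (rule card_poly_roots_bound[OF p])
  finally show False using assms(2) by simp
qed

lemma ev_lincomb_zero:
  fixes u \<beta> :: "nat \<Rightarrow> 'a::field"
  assumes "\<forall>i<n. u i \<noteq> 0" "inj_on \<beta> {..<n}" "N \<le> n"
    and "(\<Sum>j<N. sc (c j) (ev n u \<beta> j)) = 0" "j < N"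
  shows "c j = 0"
proof -
  define p where "p = (\<Sum>j<N. monom (c j) j)"
  have deg: "degree p < n"
  proof -
    have "degree p \<le> N - 1" unfolding p_def
      by (intro degree_sum_le) (auto intro: order.trans[OF degree_monom_le])
    thus ?thesis using assms(3,5) by linarith
  qed
  have "poly p (\<beta> i) = 0" if i: "i < n" for i
  proof -
    have "(\<Sum>j<N. sc (c j) (ev n u \<beta> j)) i = 0" using assms(4) by simp
    hence "(\<Sum>j<N. c j * (u i * \<beta> i ^ j)) = 0"
      by (simp add: sum_fun_apply sc_def ev_def i)
    hence "u i * (\<Sum>j<N. c j * \<beta> i ^ j) = 0"
      by (simp add: sum_distrib_left algebra_simps)
    hence "(\<Sum>j<N. c j * \<beta> i ^ j) = 0" using assms(1) i by simp
    thus ?thesis by (simp add: p_def poly_sum poly_monom)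
  qed
  hence "p = 0" using poly_zero_many_roots[OF assms(2) deg] by blast
  hence "coeff p j = 0" by simp
  thus ?thesis using assms(5) by (simp add: p_def coeff_sum coeff_monom)
qed

lemma ev_inj:
  fixes u \<beta> :: "nat \<Rightarrow> 'a::field"
  assumes "\<forall>i<n. u i \<noteq> 0" "inj_on \<beta> {..<n}" "N \<le> n"
  shows "inj_on (ev n u \<beta>) {..<N}"
proof
  fix j j' assume j: "j \<in> {..<N}" "j' \<in> {..<N}" and eq: "ev n u \<beta> j = ev n u \<beta> j'"
  show "j = j'"
  proof (rule ccontr)
    assume ne: "j \<noteq> j'"
    define c where "c = (\<lambda>l. if l = j then 1 else if l = j' then -1 else (0::'a))"
    have "(\<Sum>l<N. sc (c l) (ev n u \<beta> l)) = (\<Sum>l\<in>{j,j'}. sc (c l) (ev n u \<beta> l))"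
      by (rule sum.mono_neutral_right) (use j in \<open>auto simp: c_def sc_def\<close>)
    also have "\<dots> = 0" using ne eq by (simp add: c_def sc_def fun_eq_iff)
    finally have "c j = 0" using ev_lincomb_zero[OF assms] j by blast
    thus False by (simp add: c_def)
  qed
qed

lemma ev_indep:
  fixes u \<beta> :: "nat \<Rightarrow> 'a::field"
  assumes "\<forall>i<n. u i \<noteq> 0" "inj_on \<beta> {..<n}" "N \<le> n"
  shows "V.independent (ev n u \<beta> ` {..<N})" "card (ev n u \<beta> ` {..<N}) = N"
proof -
  have inj: "inj_on (ev n u \<beta>) {..<N}" by (rule ev_inj[OF assms])
  thus "card (ev n u \<beta> ` {..<N}) = N" by (simp add: card_image)
  show "V.independent (ev n u \<beta> ` {..<N})"
  proof
    assume "V.dependent (ev n u \<beta> ` {..<N})"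
    then obtain g where g: "\<exists>v\<in>ev n u \<beta> ` {..<N}. g v \<noteq> 0"
       "(\<Sum>v\<in>ev n u \<beta> ` {..<N}. sc (g v) v) = 0"
      by (auto simp: V.dependent_finite)
    from g(2) have "(\<Sum>j<N. sc (g (ev n u \<beta> j)) (ev n u \<beta> j)) = 0"
      by (simp add: sum.reindex[OF inj])
    hence "\<forall>j<N. g (ev n u \<beta> j) = 0"
      using ev_lincomb_zero[OF assms, of "\<lambda>j. g (ev n u \<beta> j)"] by blast
    thus False using g(1) by auto
  qed
qed

lemma poly_in_span:
  fixes f :: "'a::field poly"
  assumes "f = 0 \<or> degree f < N"
  shows "(\<lambda>i. if i < n then u i * poly f (a i) else 0) \<in> V.span (ev n u a ` {..<N})"
proof -
  have pf: "poly f x = (\<Sum>j<N. coeff f j * x ^ j)" for x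
  proof (cases "f = 0")
    case True thus ?thesis by simp
  next
    case False
    hence d: "degree f < N" using assms by auto
    have "poly f x = (\<Sum>j\<le>degree f. coeff f j * x ^ j)" by (rule poly_altdef)
    also have "\<dots> = (\<Sum>j<N. coeff f j * x ^ j)"
      by (rule sum.mono_neutral_left) (use d in \<open>auto simp: coeff_eq_0\<close>)
    finally show ?thesis .
  qed
  have "(\<lambda>i. if i < n then u i * poly f (a i) else 0) = (\<Sum>j<N. sc (coeff f j) (ev n u a j))"
    by (auto simp: fun_eq_iff sum_fun_apply sc_def ev_def pf sum_distrib_left algebra_simps)
  also have "\<dots> \<in> V.span (ev n u a ` {..<N})"
    by (intro V.span_sum V.span_scale V.span_base) auto
  finally show ?thesis .
qed

theorem theorem4p4:
  fixes \<alpha> :: "nat \<Rightarrow> 'a::{finite,field}"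
    and n k r h :: nat
  assumes "4 \<le> k" and "2 * k + 1 \<le> n" and "n \<le> CARD('a)"
    and "2 \<le> r" and "r \<le> k - 2"
    and "h = (k - 1) + r" and "h + 2 \<le> CARD('a)"
    and "inj_on \<alpha> {..<n}"
    and "is_MDS n (C_hk n h k \<alpha>)"
  shows "is_MDS n (C_hk n h k \<alpha>) \<and> \<not> is_GRS_equiv n (C_hk n h k \<alpha>)"
proof
  show "is_MDS n (C_hk n h k \<alpha>)" by fact
  show "\<not> is_GRS_equiv n (C_hk n h k \<alpha>)"
  proof
    assume "is_GRS_equiv n (C_hk n h k \<alpha>)"
    then obtain k' a w \<sigma> s where a: "inj_on a {..<n}" and w: "\<forall>i<n. w i \<noteq> 0"
      and \<sigma>: "\<sigma> permutes {..<n}" and s: "\<forall>i<n. s i \<noteq> 0"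
      and D: "GRS n k' a w = (\<lambda>v. \<lambda>i. if i < n then s i * v (\<sigma> i) else 0) ` C_hk n h k \<alpha>"
      unfolding is_GRS_equiv_def mono_equiv_def by blast
    define E where "E = {0..k-2} \<union> {h}"
    define \<beta> where "\<beta> = \<alpha> \<circ> \<sigma>"
    have \<sigma>n: "\<And>i. i < n \<Longrightarrow> \<sigma> i < n" using permutes_in_image[OF \<sigma>] by auto
    have \<beta>inj: "inj_on \<beta> {..<n}" unfolding \<beta>_def
      using comp_inj_on[OF permutes_inj_on[OF \<sigma>]] permutes_image[OF \<sigma>] assms(8) by metis
    have hk: "k + 1 \<le> h" "h \<le> 2 * k - 3" using assms(1,4,5,6) by auto
    have finE: "finite E" by (simp add: E_def)
    have cardE: "card E = k"
    proof -
      have "h \<notin> {0..k-2}" using hk by auto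
      hence "card E = card {0..k-2} + 1" by (simp add: E_def)
      thus ?thesis using assms(1) by simp
    qed
    have Cdef: "C_hk n h k \<alpha> = {(\<lambda>i. if i < n then (\<Sum>e\<in>E. c e * \<alpha> i ^ e) else 0) | c. True}"
      unfolding E_def C_hk_def eval_code_def by (simp only: Un_insert_right Un_empty_right)
    have inD: "ev n s \<beta> e \<in> GRS n k' a w" if e: "e \<in> E" for e
    proof -
      have "(\<lambda>i. if i < n then (\<Sum>e'\<in>E. (if e' = e then 1 else 0) * \<alpha> i ^ e') else 0)
            \<in> C_hk n h k \<alpha>" unfolding Cdef
        by (rule CollectI, rule exI[of _ "\<lambda>e'. if e' = e then 1 else 0"]) simp
      moreover have "(\<lambda>i. if i < n then (\<Sum>e'\<in>E. (if e' = e then 1 else 0) * \<alpha> i ^ e') else 0)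
           = (\<lambda>i. if i < n then \<alpha> i ^ e else 0)"
      proof -
        have "(\<Sum>e'\<in>E. (if e' = e then 1 else 0) * x e') = x e" for x :: "nat \<Rightarrow> 'a"
        proof -
          have "(\<Sum>e'\<in>E. (if e' = e then 1 else 0) * x e') = (\<Sum>e'\<in>E. if e' = e then x e' else 0)"
            by (rule sum.cong) auto
          also have "\<dots> = x e" using e finE by (simp add: sum.delta)
          finally show ?thesis .
        qed
        note hx = this
        show ?thesis by (rule ext) (simp only: hx)
      qed
      ultimately have xC: "(\<lambda>i. if i < n then \<alpha> i ^ e else 0) \<in> C_hk n h k \<alpha>" by simp
      have "(\<lambda>i. if i < n then s i * (\<lambda>i. if i < n then \<alpha> i ^ e else 0) (\<sigma> i) else 0)
             \<in> GRS n k' a w" unfolding D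
        by (rule image_eqI[OF _ xC]) simp
      moreover have "(\<lambda>i. if i < n then s i * (\<lambda>i. if i < n then \<alpha> i ^ e else 0) (\<sigma> i) else 0)
           = ev n s \<beta> e" using \<sigma>n by (auto simp: fun_eq_iff ev_def \<beta>_def)
      ultimately show ?thesis by simp
    qed
    have "\<forall>e\<in>E. \<exists>f. (f = 0 \<or> degree f < k') \<and>
            ev n s \<beta> e = (\<lambda>i. if i < n then w i * poly f (a i) else 0)"
      using inD unfolding GRS_def by blast
    then obtain f where f: "\<And>e. e \<in> E \<Longrightarrow> (f e = 0 \<or> degree (f e) < k') \<and>
            ev n s \<beta> e = (\<lambda>i. if i < n then w i * poly (f e) (a i) else 0)"
      by metis
    have Dspan: "GRS n k' a w \<subseteq> V.span (ev n s \<beta> ` E)"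
    proof
      fix d assume "d \<in> GRS n k' a w"
      then obtain x c where dx: "d = (\<lambda>i. if i < n then s i * x (\<sigma> i) else 0)"
        and xc: "x = (\<lambda>i. if i < n then (\<Sum>e\<in>E. c e * \<alpha> i ^ e) else 0)"
        unfolding D Cdef by (auto elim!: imageE)
      have d: "d = (\<lambda>i. if i < n then s i * (\<Sum>e\<in>E. c e * \<alpha> (\<sigma> i) ^ e) else 0)"
        unfolding dx xc using \<sigma>n by (auto simp: fun_eq_iff)
      have "d = (\<Sum>e\<in>E. sc (c e) (ev n s \<beta> e))"
        by (auto simp: d fun_eq_iff sum_fun_apply sc_def ev_def \<beta>_def sum_distrib_left algebra_simps)
      also have "\<dots> \<in> V.span (ev n s \<beta> ` E)"
        by (intro V.span_sum V.span_scale V.span_base) auto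
      finally show "d \<in> V.span (ev n s \<beta> ` E)" .
    qed
    have k'le: "k' \<le> k"
    proof (rule ccontr)
      assume "\<not> k' \<le> k"
      have sub: "ev n w a ` {..<k+1} \<subseteq> GRS n k' a w"
      proof
        fix v assume "v \<in> ev n w a ` {..<k+1}"
        then obtain j where j: "j < k + 1" "v = ev n w a j" by auto
        have "v = (\<lambda>i. if i < n then w i * poly (monom 1 j) (a i) else 0)"
        proof -
          have pm: "poly (monom (1::'a) j) x = x ^ j" for x by (rule trans[OF poly_monom]) simp
          show ?thesis unfolding j(2) ev_def pm ..
        qed
        moreover have "degree (monom (1::'a) j) < k'" using j \<open>\<not> k' \<le> k\<close>
          by (simp add: degree_monom_eq)
        ultimately show "v \<in> GRS n k' a w" unfolding GRS_def by blast
      qed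
      have ind: "V.independent (ev n w a ` {..<k+1})"
        by (rule ev_indep(1)[OF w a]) (use assms(2) in linarith)
      have "ev n w a ` {..<k+1} \<subseteq> V.span (ev n s \<beta> ` E)" using sub Dspan by (rule order.trans)
      hence "card (ev n w a ` {..<k+1}) \<le> card (ev n s \<beta> ` E)"
        using V.independent_span_bound[OF finite_imageI[OF finE] ind] by blast
      also have "\<dots> \<le> k" using card_image_le[OF finE] cardE by simp
      finally show False using ev_indep(2)[OF w a, of "k+1"] assms(2) by simp
    qed
    have s2: "\<forall>i<n. s i ^ 2 \<noteq> 0" using s by simp
    have Ysub: "ev n (\<lambda>i. s i ^ 2) \<beta> ` {..<2*k} \<subseteq> V.span (ev n (\<lambda>i. w i ^ 2) a ` {..<2*k'-1})"
    proof
      fix v assume "v \<in> ev n (\<lambda>i. s i ^ 2) \<beta> ` {..<2*k}"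
      then obtain m where m: "m < 2 * k" "v = ev n (\<lambda>i. s i ^ 2) \<beta> m" by auto
      obtain b c where bc: "b \<in> E" "c \<in> E" "b + c = m"
      proof (cases "m \<le> 2 * k - 4")
        case True
        show ?thesis
          by (rule that[of "min m (k-2)" "m - min m (k-2)"]) (use True assms(1) in \<open>auto simp: E_def\<close>)
      next
        case False
        show ?thesis
          by (rule that[of h "m - h"]) (use False hk m assms(1) in \<open>auto simp: E_def\<close>)
      qed
      have "v = (\<lambda>i. if i < n then w i ^ 2 * poly (f b * f c) (a i) else 0)"
      proof -
        have "v = (\<lambda>i. ev n s \<beta> b i * ev n s \<beta> c i)"
          by (simp add: m ev_def fun_eq_iff power2_eq_square power_add bc(3)[symmetric] mult_ac)
        also have "\<dots> = (\<lambda>i. if i < n then w i ^ 2 * poly (f b * f c) (a i) else 0)"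
          by (subst f[OF bc(1)], subst f[OF bc(2)]) (simp add: fun_eq_iff power2_eq_square mult_ac)
        finally show ?thesis .
      qed
      moreover have "f b * f c = 0 \<or> degree (f b * f c) < 2 * k' - 1"
      proof (cases "f b = 0 \<or> f c = 0")
        case True thus ?thesis by auto
      next
        case False
        hence "degree (f b) < k'" "degree (f c) < k'" using f[OF bc(1)] f[OF bc(2)] by auto
        moreover have "degree (f b * f c) \<le> degree (f b) + degree (f c)" by (rule degree_mult_le)
        ultimately show ?thesis by linarith
      qed
      ultimately show "v \<in> V.span (ev n (\<lambda>i. w i ^ 2) a ` {..<2*k'-1})"
        using poly_in_span[of "f b * f c" "2*k'-1" n "\<lambda>i. w i ^ 2" a] by simp
    qed
    have w2: "\<forall>i<n. w i ^ 2 \<noteq> 0" using w by simp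
    have "2 * k = card (ev n (\<lambda>i. s i ^ 2) \<beta> ` {..<2*k})"
      using ev_indep(2)[OF s2 \<beta>inj, of "2*k"] assms(2) by simp
    also have "\<dots> \<le> card (ev n (\<lambda>i. w i ^ 2) a ` {..<2*k'-1})"
    proof -
      have ind: "V.independent (ev n (\<lambda>i. s i ^ 2) \<beta> ` {..<2*k})"
        by (rule ev_indep(1)[OF s2 \<beta>inj]) (use assms(2) in linarith)
      show ?thesis using V.independent_span_bound[OF finite_imageI[OF finite_lessThan] ind Ysub] by blast
    qed
    also have "\<dots> \<le> 2 * k' - 1" using card_image_le[of "{..<2*k'-1}"] by simp
    finally show False using k'le assms(1) by linarith
  qed
qed

end
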